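(* Let $A \subseteq \mathbb{C}$ be countable and dense in $\mathbb{C}$. Then there is a transcendental entire function $f$ such that $f^{(s)}(A) \subseteq A$ for all integers $s \geq 0$.
   Context: A transcendental entire function is an entire function $\mathbb{C}\to\mathbb{C}$ that is not a polynomial. $f^{(s)}$ denotes the $s$-th derivative of $f$, with $f^{(0)}=f$. *)

theory Defs
  imports "HOL-Analysis.Analysis" "HOL-Computational_Algebra.Polynomial"
begin

definition entire :: "(complex \<Rightarrow> complex) \<Rightarrow> bool" where
  "entire f \<longleftrightarrow> f holomorphic_on UNIV"

definition transcendental_entire :: "(complex \<Rightarrow> complex) \<Rightarrow> bool" where
  "transcendental_entire f \<longleftrightarrow> entire f \<and> \<not> (\<exists>p :: complex poly. \<forall>z. f z = poly p z)"

end

theory Submission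
  imports Defs
begin

fun cc :: "(nat \<Rightarrow> (nat \<Rightarrow> complex) \<Rightarrow> complex) \<Rightarrow> nat \<Rightarrow> complex" where
  "cc G n = G n (\<lambda>m. if m < n then cc G m else 0)"

definition PM :: "complex poly \<Rightarrow> real \<Rightarrow> real" where
  "PM p R = (\<Sum>i\<le>degree p. norm (coeff p i) * R ^ i)"

lemma PM_bound:
  assumes "norm z \<le> R"
  shows "norm (poly p z) \<le> PM p R"
proof -
  have "norm (poly p z) = norm (\<Sum>i\<le>degree p. coeff p i * z ^ i)" by (simp add: poly_altdef)
  also have "\<dots> \<le> (\<Sum>i\<le>degree p. norm (coeff p i * z ^ i))" by (rule norm_sum)
  also have "\<dots> \<le> PM p R" unfolding PM_def
    by (rule sum_mono) (simp add: norm_mult norm_power mult_left_mono power_mono assms)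
  finally show ?thesis .
qed

lemma PM_nonneg: "0 \<le> R \<Longrightarrow> 0 \<le> PM p R"
  by (simp add: PM_def sum_nonneg)

lemma pderiv_iter_order:
  fixes p :: "complex poly"
  assumes "p \<noteq> 0" "t \<le> order a p"
  shows "(pderiv ^^ t) p \<noteq> 0 \<and> order a ((pderiv ^^ t) p) = order a p - t"
  using assms(2)
proof (induction t)
  case 0 then show ?case using assms(1) by simp
next
  case (Suc t)
  let ?q = "(pderiv ^^ t) p"
  from Suc have q: "?q \<noteq> 0" "order a ?q = order a p - t" by auto
  with Suc.prems have o: "order a ?q \<noteq> 0" by simp
  hence r: "poly ?q a = 0" using order_root by blast
  have "degree ?q \<noteq> 0" using order_degree[OF q(1), of a] o by simp
  hence nz: "pderiv ?q \<noteq> 0" by (simp add: pderiv_eq_0_iff)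
  have "order a ?q = Suc (order a (pderiv ?q))" by (rule order_pderiv[OF q(1) r])
  then show ?case using nz q(2) by simp
qed

lemma pderiv_iter_zero:
  fixes p :: "complex poly"
  assumes "p \<noteq> 0" "t < order a p"
  shows "poly ((pderiv ^^ t) p) a = 0"
proof -
  have "(pderiv ^^ t) p \<noteq> 0 \<and> order a ((pderiv ^^ t) p) = order a p - t"
    using pderiv_iter_order[OF assms(1), of t a] assms(2) by simp
  then show ?thesis using assms(2) order_root[of "(pderiv ^^ t) p" a] by auto
qed

lemma pderiv_iter_nonzero:
  fixes p :: "complex poly"
  assumes "p \<noteq> 0"
  shows "poly ((pderiv ^^ (order a p)) p) a \<noteq> 0"
  using pderiv_iter_order[OF assms, of "order a p" a] order_root[of "(pderiv ^^ order a p) p" a] by auto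

lemma pderiv_iter_degree: "degree ((pderiv ^^ t) p) = degree p - t" for p :: "complex poly"
  by (induction t) (auto simp: degree_pderiv)

lemma pderiv_iter_vanish: "(pderiv ^^ Suc (degree p)) p = (0::complex poly)"
proof -
  have "degree ((pderiv ^^ degree p) p) = 0" by (simp add: pderiv_iter_degree)
  then show ?thesis by (simp add: pderiv_eq_0_iff)
qed

lemma deriv_iter_poly: "(deriv ^^ s) (poly p) = poly ((pderiv ^^ s) p)" for p :: "complex poly"
proof (induction s)
  case 0 then show ?case by simp
next
  case (Suc s)
  show ?case
    by (simp add: Suc) (rule ext, rule DERIV_imp_deriv, rule poly_DERIV)
qed

lemma triangle_ge: "m \<le> triangle m"
  by (induction m) auto

lemma triangle_mono: "m \<le> n \<Longrightarrow> triangle m \<le> triangle n"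
  unfolding triangle_def by (intro div_le_mono mult_le_mono) auto

lemma prod_encode_less_fst: "prod_encode (s', j) < prod_encode (s, j) \<Longrightarrow> s' < s"
proof (rule ccontr)
  assume "prod_encode (s', j) < prod_encode (s, j)" "\<not> s' < s"
  then have "triangle (s + j) \<le> triangle (s' + j)" by (intro triangle_mono) auto
  with \<open>\<not> s' < s\<close> \<open>prod_encode (s', j) < prod_encode (s, j)\<close> show False
    by (simp add: prod_encode_def)
qed

lemma prod_encode_ge: "s \<le> prod_encode (s, j) \<and> j \<le> prod_encode (s, j)"
  using triangle_ge[of "s + j"] by (simp add: prod_encode_def)

lemma dense_nonzero:
  fixes A :: "complex set"
  assumes "closure A = UNIV" "r > 0"
  shows "\<exists>w\<in>A. w \<noteq> 0 \<and> dist w v < r"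
proof -
  have "v islimpt A" using limpt_of_closure[of v A] assms(1) by simp
  show ?thesis
  proof (cases "v = 0")
    case True
    then obtain w where "w\<in>A" "w \<noteq> v" "dist w v < r"
      using \<open>v islimpt A\<close> assms(2) unfolding islimpt_approachable by blast
    then show ?thesis using True by blast
  next
    case False
    then have "min r (norm v) > 0" using assms(2) by simp
    then obtain w where w: "w\<in>A" "w \<noteq> v" "dist w v < min r (norm v)"
      using \<open>v islimpt A\<close> unfolding islimpt_approachable by blast
    have "w \<noteq> 0" using w(3) by auto
    then show ?thesis using w by auto
  qed
qed

theorem corollary2:
  fixes A :: "complex set"
  assumes "countable A" and "closure A = UNIV"
  shows "\<exists>f. transcendental_entire f \<and> (\<forall>s::nat. (deriv ^^ s) f ` A \<subseteq> A)"
proof -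
  have infA: "infinite A"
  proof
    assume "finite A"
    then have "closed A" by (rule finite_imp_closed)
    then have "A = UNIV" using assms(2) closure_closed by metis
    with \<open>finite A\<close> show False by (metis infinite_UNIV_char_0)
  qed
  define a where "a = from_nat_into A"
  have bij: "bij_betw a UNIV A" unfolding a_def using bij_betw_from_nat_into assms(1) infA by blast
  have ainj: "a i = a k \<Longrightarrow> i = k" for i k using bij by (auto simp: bij_betw_def inj_def)
  have Aa: "x \<in> A \<Longrightarrow> \<exists>j. x = a j" for x using bij by (auto simp: bij_betw_def)
  define S where "S n = fst (prod_decode n)" for n
  define J where "J n = snd (prod_decode n)" for n
  have SJ: "prod_encode (S n, J n) = n" for n by (simp add: S_def J_def prod_decode_inverse)
  have SJ': "S (prod_encode (s, j)) = s" "J (prod_encode (s, j)) = j" for s j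
    by (simp_all add: S_def J_def prod_encode_inverse)
  define R where "R n = (\<Prod>i\<in>{i. i < n \<and> i \<noteq> J n}. [:- a i, 1:] ^ n)" for n
  define Q where "Q n = [:- a (J n), 1:] ^ S n * R n" for n
  have Rnz: "R n \<noteq> 0" for n unfolding R_def by (subst prod_zero_iff) auto
  have Qnz: "Q n \<noteq> 0" for n unfolding Q_def using Rnz by simp
  have Rval: "poly (R n) (a (J n)) \<noteq> 0" for n
    unfolding R_def poly_prod by (subst prod_zero_iff) (auto dest: ainj)
  have ordJ: "order (a (J n)) (Q n) = S n" for n
  proof -
    have "order (a (J n)) (Q n) = order (a (J n)) ([:- a (J n), 1:] ^ S n) + order (a (J n)) (R n)"
      unfolding Q_def by (rule order_mult) (use Qnz in \<open>simp add: Q_def\<close>)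
    then show ?thesis using order_power_n_n order_0I[OF Rval] by simp
  qed
  have ordI: "n \<le> order (a i) (Q n)" if "i < n" "i \<noteq> J n" for i n
  proof -
    have "[:-a i,1:]^n dvd R n" unfolding R_def by (rule dvd_prodI) (use that in auto)
    then have "[:-a i,1:]^n dvd Q n" unfolding Q_def by (rule dvd_mult)
    then have "order (a i) ([:-a i,1:]^n) \<le> order (a i) (Q n)" by (rule dvd_imp_order_le[OF Qnz])
    then show ?thesis by (simp add: order_power_n_n)
  qed
  have vanish: "poly ((pderiv ^^ S k) (Q n)) (a (J k)) = 0" if "k < n" for k n
  proof (cases "J k = J n")
    case True
    then have "S k < S n" using SJ[of k] SJ[of n] \<open>k<n\<close> prod_encode_less_fst by metis
    then show ?thesis using pderiv_iter_zero[OF Qnz] ordJ True by simp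
  next
    case False
    have "S k \<le> k" "J k \<le> k" using prod_encode_ge[of "S k" "J k"] SJ[of k] by auto
    then have "S k < order (a (J k)) (Q n)" using ordI[of "J k" n] False \<open>k<n\<close> by force
    then show ?thesis using pderiv_iter_zero[OF Qnz] by blast
  qed
  define D where "D n = poly ((pderiv ^^ S n) (Q n)) (a (J n))" for n
  have Dnz: "D n \<noteq> 0" for n using pderiv_iter_nonzero[OF Qnz[of n], of "a (J n)"] ordJ unfolding D_def by simp
  define \<delta> where "\<delta> n = (1/2)^n / (1 + (\<Sum>t\<le>n. PM ((pderiv ^^ t) (Q n)) (real n)))" for n
  have sumnn: "0 \<le> (\<Sum>t\<le>n. PM ((pderiv ^^ t) (Q n)) (real n))" for n
    by (intro sum_nonneg PM_nonneg) auto
  have \<delta>pos: "\<delta> n > 0" for n unfolding \<delta>_def using sumnn[of n] by (intro divide_pos_pos) auto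
  define V where "V n c = (\<Sum>m<n. c m * poly ((pderiv ^^ S n) (Q m)) (a (J n)))" for n and c :: "nat \<Rightarrow> complex"
  define W where "W n c = (SOME w. w \<in> A \<and> w \<noteq> 0 \<and> dist w (V n c) < norm (D n) * \<delta> n)" for n c
  define G where "G n c = (W n c - V n c) / D n" for n c
  define c where "c = cc G"
  have ceq: "c n = G n (\<lambda>m. if m < n then c m else 0)" for n unfolding c_def by (rule cc.simps)
  have Vr: "V n (\<lambda>m. if m < n then c m else 0) = V n c" for n unfolding V_def by (intro sum.cong) auto
  define w where "w n = W n c" for n
  have wprop: "w n \<in> A \<and> w n \<noteq> 0 \<and> dist (w n) (V n c) < norm (D n) * \<delta> n" for n
  proof -
    have "norm (D n) * \<delta> n > 0" using Dnz \<delta>pos by simp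
    from dense_nonzero[OF assms(2) this, of "V n c"]
    have "\<exists>x. x \<in> A \<and> x \<noteq> 0 \<and> dist x (V n c) < norm (D n) * \<delta> n" by blast
    from someI_ex[OF this] show ?thesis unfolding w_def W_def .
  qed
  have cn: "c n = (w n - V n c) / D n" for n
    using ceq[of n] by (simp add: G_def W_def w_def Vr)
  have cD: "c n * D n = w n - V n c" for n using cn Dnz by simp
  have cbound: "norm (c n) \<le> \<delta> n" for n
  proof -
    have "norm (c n) = dist (w n) (V n c) / norm (D n)" by (simp add: cn norm_divide dist_norm)
    also have "\<dots> \<le> \<delta> n" using wprop[of n] Dnz by (simp add: divide_le_eq mult.commute)
    finally show ?thesis .
  qed
  define T where "T s n z = c n * poly ((pderiv ^^ s) (Q n)) z" for s n z
  have Tbound: "norm (T s n z) \<le> (1/2)^n" if "s \<le> n" "norm z \<le> real n" for s n z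
  proof -
    let ?P = "PM ((pderiv ^^ s) (Q n)) (real n)"
    let ?\<Sigma> = "\<Sum>t\<le>n. PM ((pderiv ^^ t) (Q n)) (real n)"
    have P0: "0 \<le> ?P" by (rule PM_nonneg) simp
    have "?P \<le> ?\<Sigma>" by (rule member_le_sum) (use that in \<open>auto intro: PM_nonneg\<close>)
    have "norm (T s n z) = norm (c n) * norm (poly ((pderiv ^^ s) (Q n)) z)" by (simp add: T_def norm_mult)
    also have "\<dots> \<le> \<delta> n * ?P"
      by (intro mult_mono cbound PM_bound that) (use \<delta>pos[of n] in auto)
    also have "\<dots> \<le> \<delta> n * (1 + ?\<Sigma>)" using \<open>?P \<le> ?\<Sigma>\<close> \<delta>pos[of n] by (intro mult_left_mono) auto
    also have "\<dots> = (1/2)^n" unfolding \<delta>_def using sumnn[of n] by simp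
    finally show ?thesis .
  qed
  have geo: "summable (\<lambda>n. (1/2::real)^n)" by (rule summable_geometric) simp
  have summ: "summable (\<lambda>n. T s n z)" for s z
  proof (rule summable_comparison_test'[OF geo])
    fix n assume "max s (nat \<lceil>norm z\<rceil>) \<le> n"
    then have "s \<le> n" "norm z \<le> real n" by linarith+
    then show "norm (T s n z) \<le> (1/2)^n" by (rule Tbound)
  qed
  have unif: "uniformly_convergent_on (ball 0 r) (\<lambda>n x. \<Sum>i<n. T s i x)" for s r
  proof (rule Weierstrass_m_test'_ev[OF _ geo])
    show "\<forall>\<^sub>F n in sequentially. \<forall>x\<in>ball 0 r. norm (T s n x) \<le> (1/2)^n"
      unfolding eventually_sequentially
    proof (intro exI allI impI ballI)
      fix n x assume "max s (nat \<lceil>r\<rceil>) \<le> n" "x \<in> ball (0::complex) r"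
      then have "s \<le> n" "norm x \<le> real n" by (auto simp: dist_norm)
      then show "norm (T s n x) \<le> (1/2)^n" by (rule Tbound)
    qed
  qed
  define F where "F s z = (\<Sum>n. T s n z)" for s z
  have Fder: "(F s has_field_derivative F (Suc s) z) (at z)" for s z
  proof -
    have "((\<lambda>x. \<Sum>n. T s n x) has_field_derivative (\<Sum>n. T (Suc s) n z)) (at z)"
    proof (rule has_field_derivative_series'(2)[of "ball 0 (norm z + 1)" "\<lambda>n x. T s n x" "\<lambda>n x. T (Suc s) n x" 0])
      show "convex (ball (0::complex) (norm z + 1))" by simp
      show "(T s n has_field_derivative T (Suc s) n x) (at x within ball 0 (norm z + 1))" for n x
        unfolding T_def by (rule has_field_derivative_at_within) (auto intro!: derivative_eq_intros)
      show "uniformly_convergent_on (ball 0 (norm z + 1)) (\<lambda>n x. \<Sum>i<n. T (Suc s) i x)" by (rule unif)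
      show "0 \<in> ball (0::complex) (norm z + 1)" using norm_ge_zero[of z] by (simp add: add_nonneg_pos)
      show "summable (\<lambda>n. T s n 0)" by (rule summ)
      show "z \<in> interior (ball 0 (norm z + 1))" by simp
    qed
    then show ?thesis unfolding F_def .
  qed
  have derivF: "(deriv ^^ s) (F 0) = F s" for s
  proof (induction s)
    case 0 then show ?case by simp
  next
    case (Suc s)
    then show ?case by simp (rule ext, rule DERIV_imp_deriv, rule Fder)
  qed
  have Fval: "F (S k) (a (J k)) = w k" for k
  proof -
    have "(\<lambda>n. T (S k) n (a (J k))) sums (\<Sum>n\<in>{..k}. T (S k) n (a (J k)))"
      by (rule sums_finite) (auto simp: T_def vanish)
    moreover have "(\<Sum>n\<in>{..k}. T (S k) n (a (J k))) = w k"
    proof -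
      have "(\<Sum>n\<in>{..k}. T (S k) n (a (J k))) = (\<Sum>n<Suc k. T (S k) n (a (J k)))"
        by (simp add: lessThan_Suc_atMost)
      also have "\<dots> = V k c + c k * D k" by (simp add: T_def V_def D_def)
      also have "\<dots> = w k" using cD[of k] by simp
      finally show ?thesis .
    qed
    ultimately show ?thesis unfolding F_def by (simp add: sums_iff)
  qed
  have main: "(deriv ^^ s) (F 0) ` A \<subseteq> A" for s
  proof
    fix y assume "y \<in> (deriv ^^ s) (F 0) ` A"
    then obtain x where "x \<in> A" "y = F s x" using derivF by auto
    then obtain j where j: "x = a j" using Aa by blast
    have "F s x = w (prod_encode (s, j))" using Fval[of "prod_encode (s, j)"] j by (simp add: SJ')
    then show "y \<in> A" using wprop \<open>y = F s x\<close> by simp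
  qed
  have hol: "entire (F 0)"
    unfolding entire_def holomorphic_on_def field_differentiable_def
    using Fder by (blast intro: has_field_derivative_at_within)
  have notpoly: "\<not> (\<exists>p :: complex poly. \<forall>z. F 0 z = poly p z)"
  proof
    assume "\<exists>p :: complex poly. \<forall>z. F 0 z = poly p z"
    then obtain p :: "complex poly" where "F 0 = poly p" by blast
    define s where "s = Suc (degree p)"
    have "(deriv ^^ s) (F 0) (a 0) = 0"
      using \<open>F 0 = poly p\<close> deriv_iter_poly[of s p] pderiv_iter_vanish[of p] by (simp add: s_def)
    moreover have "(deriv ^^ s) (F 0) (a 0) = w (prod_encode (s, 0))"
      using derivF Fval[of "prod_encode (s, 0)"] by (simp add: SJ')
    ultimately show False using wprop by metis
  qed
  show ?thesis using hol notpoly main unfolding transcendental_entire_def by blast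
qed

end
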